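(* Let $p=\tfrac12$. Then $K_\infty\phi=2\phi$. Consequently $\mu_n=\langle\phi,K_\infty^n\phi\rangle=2^n$ for all $n\ge0$, and the rooted spectral measure $\nu_\phi$ (the unique finite positive Borel measure with $\langle\phi,f(K_\infty)\phi\rangle=\int f\,d\nu_\phi$ for bounded Borel $f$) is $\nu_\phi=\delta_2$.
   Context: Let $S_0(x)=x/3$, $S_2(x)=(x+2)/3$ on $[0,1]$ and let $C$ be the middle-third Cantor set. $\mu=\mu_{1/2}$ is the unique Borel probability measure on $[0,1]$ with $\mu=\frac12\mu\circ S_0^{-1}+\frac12\mu\circ S_2^{-1}$. For words $w\in\{0,2\}^n$, $S_w=S_{w_1}\circ\cdots\circ S_{w_n}$, $C_w=S_w(C)$. Inner product $\langle f,g\rangle=\int\overline fg\,d\mu$; $\phi=1_C$. $K_mf=\sum_{|u|\le m}\langle1_{C_u},f\rangle1_{C_u}$ and $K_\infty=\lim_{m\to\infty}K_m$ in operator norm on $L^2(\mu)$ (this limit exists and is compact, positive, self-adjoint). *)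

theory Defs
  imports "HOL-Probability.Probability"
begin

definition S :: "nat \<Rightarrow> real \<Rightarrow> real" where
  "S d x = (x + real d) / 3"

fun Sw :: "nat list \<Rightarrow> real \<Rightarrow> real" where
  "Sw [] = id"
| "Sw (d # w) = S d \<circ> Sw w"

definition words :: "nat list set" where
  "words = {w. set w \<subseteq> {0, 2}}"

definition words_upto :: "nat \<Rightarrow> nat list set" where
  "words_upto m = {w \<in> words. length w \<le> m}"

definition cantor :: "real set" where
  "cantor = (\<Inter>n. \<Union>{Sw w ` {0..1} | w. w \<in> words \<and> length w = n})"

definition Cw :: "nat list \<Rightarrow> real set" where
  "Cw w = Sw w ` cantor"

definition phi :: "real \<Rightarrow> complex" where
  "phi = indicator cantor"

definition cantor_measure :: "real measure \<Rightarrow> bool" where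
  "cantor_measure M \<longleftrightarrow> prob_space M \<and> sets M = sets borel \<and> emeasure M {0..1} = 1 \<and>
     (\<forall>A \<in> sets borel. emeasure M A =
        ennreal (1/2) * emeasure M (S 0 -` A) + ennreal (1/2) * emeasure M (S 2 -` A))"

definition sqint :: "real measure \<Rightarrow> (real \<Rightarrow> complex) \<Rightarrow> bool" where
  "sqint M f \<longleftrightarrow> f \<in> borel_measurable M \<and> integrable M (\<lambda>x. (cmod (f x))\<^sup>2)"

definition l2norm :: "real measure \<Rightarrow> (real \<Rightarrow> complex) \<Rightarrow> real" where
  "l2norm M f = sqrt (\<integral>x. (cmod (f x))\<^sup>2 \<partial>M)"

definition ip :: "real measure \<Rightarrow> (real \<Rightarrow> complex) \<Rightarrow> (real \<Rightarrow> complex) \<Rightarrow> complex" where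
  "ip M f g = (\<integral>x. cnj (f x) * g x \<partial>M)"

definition Kop :: "real measure \<Rightarrow> nat \<Rightarrow> (real \<Rightarrow> complex) \<Rightarrow> (real \<Rightarrow> complex)" where
  "Kop M m f = (\<lambda>x. \<Sum>u\<in>words_upto m. ip M (indicator (Cw u)) f * indicator (Cw u) x)"

definition is_Kinf :: "real measure \<Rightarrow> ((real \<Rightarrow> complex) \<Rightarrow> (real \<Rightarrow> complex)) \<Rightarrow> bool" where
  "is_Kinf M K \<longleftrightarrow> (\<forall>f. sqint M f \<longrightarrow> sqint M (K f)) \<and>
     (\<forall>e>0. \<exists>N. \<forall>m\<ge>N. \<forall>f. sqint M f \<longrightarrow>
        l2norm M (\<lambda>x. Kop M m f x - K f x) \<le> e * l2norm M f)"

text \<open>For a compact self-adjoint K the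
  eigenvectors span a dense subspace (spectral theorem), so this determines f(K).\<close>
definition is_fcalc :: "real measure \<Rightarrow> ((real \<Rightarrow> complex) \<Rightarrow> (real \<Rightarrow> complex))
    \<Rightarrow> (real \<Rightarrow> complex) \<Rightarrow> ((real \<Rightarrow> complex) \<Rightarrow> (real \<Rightarrow> complex)) \<Rightarrow> bool" where
  "is_fcalc M K f T \<longleftrightarrow>
     (\<forall>g. sqint M g \<longrightarrow> sqint M (T g)) \<and>
     (\<exists>c. \<forall>g. sqint M g \<longrightarrow> l2norm M (T g) \<le> c * l2norm M g) \<and>
     (\<forall>g h. sqint M g \<longrightarrow> sqint M h \<longrightarrow>
        (AE x in M. T (\<lambda>y. g y + h y) x = T g x + T h x)) \<and>
     (\<forall>a g. sqint M g \<longrightarrow> (AE x in M. T (\<lambda>y. a * g y) x = a * T g x)) \<and>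
     (\<forall>(lam::real) g. sqint M g \<longrightarrow> (AE x in M. K g x = complex_of_real lam * g x) \<longrightarrow>
        (AE x in M. T g x = f lam * g x))"

definition is_spectral_measure :: "real measure \<Rightarrow> ((real \<Rightarrow> complex) \<Rightarrow> (real \<Rightarrow> complex))
    \<Rightarrow> (real \<Rightarrow> complex) \<Rightarrow> real measure \<Rightarrow> bool" where
  "is_spectral_measure M K v nu \<longleftrightarrow> sets nu = sets borel \<and> finite_measure nu \<and>
     (\<forall>f T. f \<in> borel_measurable borel \<and> bounded (range f) \<and> is_fcalc M K f T \<longrightarrow>
        ip M v (T v) = (\<integral>t. f t \<partial>nu))"

end

theory Submission
  imports Defs
begin


lemma S_01: "d \<in> {0,2} \<Longrightarrow> x \<in> {0..1} \<Longrightarrow> S d x \<in> {0..1}"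
  by (auto simp: S_def)

lemma Sw_01: "set w \<subseteq> {0,2} \<Longrightarrow> x \<in> {0..1} \<Longrightarrow> Sw w x \<in> {0..1}"
proof (induction w arbitrary: x)
  case (Cons d w)
  then have "Sw w x \<in> {0..1}" "d \<in> {0,2}" by auto
  then show ?case using S_01 by simp
qed simp

lemma cont_S: "continuous_on A (S d)"
  unfolding S_def by (intro continuous_intros) auto

lemma cont_Sw: "continuous_on A (Sw w)"
proof (induction w arbitrary: A)
  case Nil then show ?case by (simp add: continuous_on_id)
next
  case (Cons d w) then show ?case
    using continuous_on_compose[OF Cons.IH[of A] cont_S[of "Sw w ` A"]] by (simp add: comp_def)
qed

lemma inj_S: "inj (S d)" by (auto simp: inj_def S_def)

lemma Sw_disj: "set u \<subseteq> {0,2} \<Longrightarrow> set v \<subseteq> {0,2} \<Longrightarrow> length u = length v \<Longrightarrow> u \<noteq> v \<Longrightarrow>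
   Sw u ` {0..1} \<inter> Sw v ` {0..1} = {}"
proof (induction u arbitrary: v)
  case Nil then show ?case by simp
next
  case (Cons d u)
  obtain e v' where v: "v = e # v'" using Cons.prems(3) by (cases v) auto
  show ?case
  proof (cases "d = e")
    case True
    have uv: "u \<noteq> v'" using Cons.prems(4) v True by simp
    have pr: "set u \<subseteq> {0,2}" "set v' \<subseteq> {0,2}" "length u = length v'" using Cons.prems(1,2,3) v by auto
    have "Sw u ` {0..1} \<inter> Sw v' ` {0..1} = {}" by (rule Cons.IH[OF pr uv])
    have i1: "Sw (d#u) ` {0..1} = S d ` (Sw u ` {0..1})" by (simp only: Sw.simps image_comp)
    have i2: "Sw v ` {0..1} = S d ` (Sw v' ` {0..1})" using v True by (simp only: Sw.simps image_comp)
    have "S d ` (Sw u ` {0..1}) \<inter> S d ` (Sw v' ` {0..1}) = S d ` (Sw u ` {0..1} \<inter> Sw v' ` {0..1})"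
      by (rule image_Int[OF inj_S, symmetric])
    then show ?thesis using i1 i2 \<open>Sw u ` {0..1} \<inter> Sw v' ` {0..1} = {}\<close> by simp
  next
    case False
    show ?thesis
    proof (rule ccontr)
      assume "Sw (d # u) ` {0..1} \<inter> Sw v ` {0..1} \<noteq> {}"
      then obtain z where z: "z \<in> Sw (d # u) ` {0..1}" "z \<in> Sw v ` {0..1}" by blast
      then obtain x y where xy: "x \<in> {0..1}" "y \<in> {0..1}" "z = Sw (d # u) x" "z = Sw v y"
        by blast
      then have xy3: "S d (Sw u x) = S e (Sw v' y)" using v by simp
      have a: "0 \<le> Sw u x" "Sw u x \<le> 1" "0 \<le> Sw v' y" "Sw v' y \<le> 1"
        using Sw_01[of u x] Sw_01[of v' y] Cons.prems(1,2) v xy(1,2) by auto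
      have de: "d \<in> {0,2}" "e \<in> {0,2}" using Cons.prems(1,2) v by auto
      have eq: "Sw u x + real d = Sw v' y + real e" using xy3 by (simp add: S_def)
      have "(d = 0 \<and> e = 2) \<or> (d = 2 \<and> e = 0)" using de False by blast
      then show False
      proof (elim disjE conjE)
        assume "d = 0" "e = 2" then show False using eq a by simp
      next
        assume "d = 2" "e = 0" then show False using eq a by simp
      qed
    qed
  qed
qed

definition E :: "nat \<Rightarrow> real set" where
  "E n = \<Union>{Sw w ` {0..1} | w. w \<in> words \<and> length w = n}"

lemma cantor_E: "cantor = (\<Inter>n. E n)" unfolding cantor_def E_def ..

lemma E0: "E 0 = {0..1}" by (auto simp: E_def words_def)

lemma cantor_01: "cantor \<subseteq> {0..1}" using E0 cantor_E by auto

lemma finite_L: "finite {w. w \<in> words \<and> length w = n}"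
  using finite_lists_length_eq[of "{0::nat,2}" n] by (simp add: words_def)

lemma card_L: "card {w. w \<in> words \<and> length w = n} = 2 ^ n"
  using card_lists_length_eq[of "{0::nat,2}" n] by (simp add: words_def numeral_2_eq_2)

lemma closed_E: "closed (E n)"
proof -
  have "E n = (\<Union>w\<in>{w. w \<in> words \<and> length w = n}. Sw w ` {0..1})" by (auto simp: E_def)
  also have "closed \<dots>"
    by (intro closed_Union finite_imageI finite_L) (auto intro!: compact_imp_closed compact_continuous_image cont_Sw)
  finally show ?thesis .
qed

lemma compact_cantor: "compact cantor"
proof -
  have "closed cantor" unfolding cantor_E by (simp add: closed_INT closed_E)
  moreover have "bounded cantor" using cantor_01 bounded_subset[of "{0..1::real}"] by auto
  ultimately show ?thesis by (simp add: compact_eq_bounded_closed)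
qed

lemma compact_Cw: "compact (Cw u)"
  unfolding Cw_def by (intro compact_continuous_image cont_Sw compact_cantor)

lemma borel_Cw: "Cw u \<in> sets borel" by (simp add: borel_closed compact_imp_closed compact_Cw)
lemma borel_cantor: "cantor \<in> sets borel" by (simp add: borel_closed compact_imp_closed compact_cantor)
lemma borel_E: "E n \<in> sets borel" by (simp add: borel_closed closed_E)

lemma S_E: "d \<in> {0,2} \<Longrightarrow> x \<in> E n \<Longrightarrow> S d x \<in> E (Suc n)"
proof -
  assume d: "d \<in> {0,2}" and x: "x \<in> E n"
  then obtain w y where w: "w \<in> words" "length w = n" "y \<in> {0..1}" "x = Sw w y"
    unfolding E_def by blast
  have "d # w \<in> words" using w(1) d by (simp add: words_def)
  moreover have "S d x = Sw (d # w) y" using w(4) by simp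
  ultimately show ?thesis unfolding E_def using w(2,3) by force
qed

lemma S_cantor: "d \<in> {0,2} \<Longrightarrow> x \<in> cantor \<Longrightarrow> S d x \<in> cantor"
proof -
  assume d: "d \<in> {0,2}" and x: "x \<in> cantor"
  have "S d x \<in> E n" for n
  proof (cases n)
    case 0 then show ?thesis using x cantor_01 S_01[OF d] E0 by auto
  next
    case (Suc k) then show ?thesis using S_E[OF d, of x k] x cantor_E by auto
  qed
  then show ?thesis using cantor_E by auto
qed

lemma Cw_sub: "set u \<subseteq> {0,2} \<Longrightarrow> Cw u \<subseteq> cantor"
  by (induction u) (auto simp: Cw_def S_cantor)

lemma Cw_sub_int: "Cw u \<subseteq> Sw u ` {0..1}"
  using cantor_01 unfolding Cw_def by auto

lemma Cw_disj: "set u \<subseteq> {0,2} \<Longrightarrow> set v \<subseteq> {0,2} \<Longrightarrow> length u = length v \<Longrightarrow> u \<noteq> v \<Longrightarrow>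
   Cw u \<inter> Cw v = {}"
  using Sw_disj[of u v] Cw_sub_int[of u] Cw_sub_int[of v] by auto

lemma Cw_Cons: "Cw (d # u) = S d ` Cw u" by (auto simp: Cw_def)



locale cmeas = fixes M :: "real measure" assumes cm: "cantor_measure M"

sublocale cmeas \<subseteq> prob_space M using cm by (simp add: cantor_measure_def)

context cmeas begin

lemma sets_M: "sets M = sets borel" using cm by (simp add: cantor_measure_def)
lemma space_M: "space M = UNIV" using sets_eq_imp_space_eq[OF sets_M] by simp

lemma borel_S[measurable]: "S d \<in> borel_measurable borel"
  unfolding S_def by measurable

lemma vimage_S_borel: "A \<in> sets borel \<Longrightarrow> S d -` A \<in> sets borel"
  using measurable_sets[OF borel_S, of A d] by simp

lemma selfsim: "A \<in> sets borel \<Longrightarrow>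
  measure M A = measure M (S 0 -` A) / 2 + measure M (S 2 -` A) / 2"
proof -
  assume A: "A \<in> sets borel"
  have e: "emeasure M A = ennreal (1/2) * emeasure M (S 0 -` A) + ennreal (1/2) * emeasure M (S 2 -` A)"
    using cm A unfolding cantor_measure_def by blast
  have "ennreal (measure M A) = ennreal (1/2 * measure M (S 0 -` A) + 1/2 * measure M (S 2 -` A))"
  proof -
    have h1: "ennreal (1/2) * ennreal (measure M (S 0 -` A)) = ennreal (1/2 * measure M (S 0 -` A))"
      by (rule ennreal_mult[symmetric]) auto
    have h2: "ennreal (1/2) * ennreal (measure M (S 2 -` A)) = ennreal (1/2 * measure M (S 2 -` A))"
      by (rule ennreal_mult[symmetric]) auto
    have "ennreal (measure M A) = ennreal (1/2 * measure M (S 0 -` A)) + ennreal (1/2 * measure M (S 2 -` A))"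
      using e unfolding emeasure_eq_measure h1 h2 .
    also have "\<dots> = ennreal (1/2 * measure M (S 0 -` A) + 1/2 * measure M (S 2 -` A))"
      by (rule ennreal_plus[symmetric]) auto
    finally show ?thesis .
  qed
  then have "measure M A = 1/2 * measure M (S 0 -` A) + 1/2 * measure M (S 2 -` A)"
    by (subst (asm) ennreal_inj) auto
  then show ?thesis by simp
qed

lemma meas01: "measure M {0..1} = 1"
proof -
  have "emeasure M {0..1} = 1" using cm unfolding cantor_measure_def by blast
  then show ?thesis unfolding emeasure_eq_measure by simp
qed

lemma null_out: "measure M (- {0..1}) = 0"
proof -
  have "measure M (space M - {0..1}) = 1 - measure M {0..1}"
    by (rule prob_compl) (simp add: sets_M)
  then show ?thesis using meas01 space_M by (simp add: Compl_eq_Diff_UNIV)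
qed

lemma null_out_sub: "B \<subseteq> - {0..1} \<Longrightarrow> B \<in> sets borel \<Longrightarrow> measure M B = 0"
proof -
  assume "B \<subseteq> - {0..1}" "B \<in> sets borel"
  moreover have "- {0..1} \<in> sets M" by (simp add: sets_M)
  ultimately have "measure M B \<le> measure M (- {0..1})" using finite_measure_mono by blast
  then show ?thesis using null_out measure_nonneg[of M B] by linarith
qed

lemma prob_E: "measure M (E n) = 1"
proof (induction n)
  case 0 then show ?case using E0 meas01 by simp
next
  case (Suc n)
  have le: "measure M (S d -` E (Suc n)) = 1" if d: "d \<in> {0,2}" for d
  proof -
    have sb: "S d -` E (Suc n) \<in> sets M" using sets_M vimage_S_borel borel_E by metis
    have "E n \<subseteq> S d -` E (Suc n)" using S_E[OF d] by auto
    then have "measure M (E n) \<le> measure M (S d -` E (Suc n))"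
      using finite_measure_mono[OF _ sb] by blast
    then show ?thesis using Suc prob_le_1 antisym by metis
  qed
  show ?case using selfsim[OF borel_E, of "Suc n"] le[of 0] le[of 2] by simp
qed

lemma AE_cantor: "AE x in M. x \<in> cantor"
proof -
  have "AE x in M. x \<in> E n" for n by (rule AE_prob_1) (rule prob_E)
  then have "AE x in M. \<forall>n. x \<in> E n" by (simp add: AE_all_countable)
  then show ?thesis by (simp add: cantor_E)
qed

lemma prob_cantor: "measure M cantor = 1"
  using AE_in_set_eq_1[of cantor] AE_cantor by (simp add: sets_M borel_cantor)

lemma Cw_01: "Cw u \<subseteq> {0..1}" if "set u \<subseteq> {0,2}"
  using Cw_sub[OF that] cantor_01 by auto

lemma pre_S_image: assumes d: "d \<in> {0,2}" and e: "e \<in> {0,2}" and X: "X \<subseteq> {0..1}" "X \<in> sets borel"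
  and Xi: "S d ` X \<in> sets borel"
  shows "measure M (S e -` (S d ` X)) = (if e = d then measure M X else 0)"
proof (cases "e = d")
  case True
  then have "S e -` (S d ` X) = X" using inj_vimage_image_eq[OF inj_S[of d]] by simp
  then show ?thesis using True by simp
next
  case False
  have "S e -` (S d ` X) \<subseteq> - {0..1}"
  proof
    fix y assume "y \<in> S e -` (S d ` X)"
    then obtain z where z: "z \<in> X" "S e y = S d z" by auto
    then have "z \<in> {0..1}" using X by auto
    moreover have "y + real e = z + real d" using z(2) by (simp add: S_def)
    moreover have "(d = 0 \<and> e = 2) \<or> (d = 2 \<and> e = 0)" using d e False by blast
    ultimately have "y \<ge> 2 \<or> y \<le> -1"
    proof (elim disjE conjE)
      assume "z \<in> {0..1}" "y + real e = z + real d" "d = 0" "e = 2"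
      then show ?thesis by simp
    next
      assume "z \<in> {0..1}" "y + real e = z + real d" "d = 2" "e = 0"
      then show ?thesis by simp
    qed
    then show "y \<in> - {0..1}" by auto
  qed
  then show ?thesis using False null_out_sub vimage_S_borel[OF Xi] by simp
qed

lemma mu_Cw: "set u \<subseteq> {0,2} \<Longrightarrow> measure M (Cw u) = (1/2) ^ length u"
proof (induction u)
  case Nil
  have "Cw [] = cantor" by (simp add: Cw_def)
  then show ?case using prob_cantor by simp
next
  case (Cons d u)
  have d: "d \<in> {0,2}" and u: "set u \<subseteq> {0,2}" using Cons.prems by auto
  have IH: "measure M (Cw u) = (1/2) ^ length u" using Cons.IH u by simp
  have eq: "Cw (d # u) = S d ` Cw u" by (rule Cw_Cons)
  have p: "measure M (S e -` Cw (d # u)) = (if e = d then measure M (Cw u) else 0)" if "e \<in> {0,2}" for e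
    unfolding eq by (rule pre_S_image[OF d that Cw_01[OF u] borel_Cw]) (simp add: borel_Cw flip: eq)
  have "measure M (Cw (d # u)) = measure M (S 0 -` Cw (d # u)) / 2 + measure M (S 2 -` Cw (d # u)) / 2"
    by (rule selfsim[OF borel_Cw])
  also have "\<dots> = measure M (Cw u) / 2" using p[of 0] p[of 2] d by auto
  finally show ?case using IH by simp
qed

end


definition L :: "nat \<Rightarrow> nat list set" where "L n = {w. w \<in> words \<and> length w = n}"

definition fn :: "nat \<Rightarrow> real \<Rightarrow> real" where
  "fn n x = (\<Sum>u\<in>L n. indicator (Cw u) x)"

lemma L_words: "u \<in> L n \<Longrightarrow> set u \<subseteq> {0,2}" by (simp add: L_def words_def)
lemma finite_Ln: "finite (L n)" using finite_L by (simp add: L_def)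
lemma card_Ln: "card (L n) = 2 ^ n" using card_L by (simp add: L_def)

lemma phi_real: "phi x = complex_of_real (indicator cantor x)"
  by (simp add: phi_def split: split_indicator)

lemma fn_le: "fn n x \<le> indicator cantor x"
proof (cases "\<exists>u\<in>L n. x \<in> Cw u")
  case True
  then obtain u where u: "u \<in> L n" "x \<in> Cw u" by blast
  have "indicator (Cw v) x = (if v = u then 1 else (0::real))" if v: "v \<in> L n" for v
  proof (cases "v = u")
    case False
    have "Cw v \<inter> Cw u = {}"
      by (rule Cw_disj) (use v u False in \<open>auto simp: L_def words_def\<close>)
    then show ?thesis using False u(2) by (auto simp: indicator_def)
  qed (simp add: u indicator_def)
  then have "fn n x = (\<Sum>v\<in>L n. if v = u then 1 else 0)"
    unfolding fn_def by (rule sum.cong[OF refl])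
  also have "\<dots> = 1" using u(1) finite_Ln by simp
  finally show ?thesis using Cw_sub[OF L_words[OF u(1)]] u(2) by (auto simp: indicator_def)
next
  case False
  then have "fn n x = 0" unfolding fn_def by (intro sum.neutral) (auto simp: indicator_def)
  then show ?thesis by (simp add: indicator_def)
qed

lemma fn_nonneg: "0 \<le> fn n x" unfolding fn_def by (intro sum_nonneg) (simp add: indicator_def)

context cmeas begin

lemma borel_fn[measurable]: "fn n \<in> borel_measurable M"
proof -
  have "(\<lambda>x. \<Sum>u\<in>L n. indicator (Cw u) x :: real) \<in> borel_measurable M"
    by (intro borel_measurable_sum borel_measurable_indicator) (simp add: sets_M borel_Cw)
  then show ?thesis unfolding fn_def .
qed

lemma integrable_ind: "A \<in> sets borel \<Longrightarrow> integrable M (indicator A :: real \<Rightarrow> real)"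
  by (rule integrable_real_indicator) (simp_all add: sets_M emeasure_eq_measure)

lemma integral_fn: "integral\<^sup>L M (fn n) = 1"
proof -
  have "integral\<^sup>L M (fn n) = (\<Sum>u\<in>L n. integral\<^sup>L M (indicator (Cw u) :: real \<Rightarrow> real))"
    unfolding fn_def by (rule Bochner_Integration.integral_sum) (simp add: integrable_ind borel_Cw)
  also have "\<dots> = (\<Sum>u\<in>L n. (1/2) ^ n)"
  proof (rule sum.cong[OF refl])
    fix u assume u: "u \<in> L n"
    have "integral\<^sup>L M (indicator (Cw u) :: real \<Rightarrow> real) = measure M (Cw u)"
      by (simp add: space_M)
    also have "\<dots> = (1/2) ^ n" using mu_Cw[OF L_words[OF u]] u by (simp add: L_def)
    finally show "integral\<^sup>L M (indicator (Cw u) :: real \<Rightarrow> real) = (1/2) ^ n" .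
  qed
  also have "\<dots> = 2 ^ n * (1/2) ^ n" using card_Ln by simp
  also have "\<dots> = 1" by (simp add: power_mult_distrib[symmetric])
  finally show ?thesis .
qed

lemma integral_cantor: "integral\<^sup>L M (indicator cantor :: real \<Rightarrow> real) = 1"
  using prob_cantor by (simp add: space_M)

lemma AE_fn: "AE x in M. fn n x = indicator cantor x"
proof -
  let ?g = "\<lambda>x. indicator cantor x - fn n x :: real"
  have int: "integrable M ?g"
  proof (rule Bochner_Integration.integrable_diff)
    show "integrable M (indicator cantor :: real \<Rightarrow> real)" by (rule integrable_ind[OF borel_cantor])
    show "integrable M (fn n)" unfolding fn_def
      by (rule Bochner_Integration.integrable_sum) (simp add: integrable_ind borel_Cw)
  qed
  have "integral\<^sup>L M ?g = 0"
  proof -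
    have "integral\<^sup>L M ?g = integral\<^sup>L M (indicator cantor :: real \<Rightarrow> real) - integral\<^sup>L M (fn n)"
      by (rule Bochner_Integration.integral_diff) (use int in \<open>simp_all add: integrable_ind borel_cantor fn_def Bochner_Integration.integrable_sum borel_Cw\<close>)
    then show ?thesis using integral_cantor integral_fn by simp
  qed
  moreover have "AE x in M. 0 \<le> ?g x" using fn_le by simp
  ultimately have "AE x in M. ?g x = 0" using integral_nonneg_eq_0_iff_AE[OF int] by simp
  then show ?thesis by eventually_elim simp
qed

lemma ip_Cw_phi: assumes u: "set u \<subseteq> {0,2}"
  shows "ip M (indicator (Cw u)) phi = complex_of_real ((1/2) ^ length u)"
proof -
  have eq: "cnj (indicator (Cw u) x) * phi x = complex_of_real (indicator (Cw u) x)" for x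
  proof (cases "x \<in> Cw u")
    case True
    then have "x \<in> cantor" using Cw_sub[OF u] by auto
    then show ?thesis using True by (simp add: phi_def)
  qed simp
  have "ip M (indicator (Cw u)) phi = (\<integral>x. complex_of_real (indicator (Cw u) x) \<partial>M)"
    unfolding ip_def eq ..
  also have "\<dots> = complex_of_real (measure M (Cw u))"
    by (simp add: integral_complex_of_real space_M)
  finally show ?thesis using mu_Cw[OF u] by simp
qed

lemma geom: "(\<Sum>n\<le>m. (1/2::real) ^ n) = 2 - (1/2) ^ m"
  by (induction m) (simp_all add: field_simps)

lemma words_upto_UN: "words_upto m = (\<Union>n\<in>{..m}. L n)"
  by (auto simp: words_upto_def L_def)

lemma Kop_phi: "Kop M m phi x = complex_of_real (\<Sum>n\<le>m. (1/2) ^ n * fn n x)"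
proof -
  have "Kop M m phi x = (\<Sum>u\<in>words_upto m. complex_of_real ((1/2) ^ length u * indicator (Cw u) x))"
    unfolding Kop_def
  proof (rule sum.cong[OF refl])
    fix u assume "u \<in> words_upto m"
    then have u: "set u \<subseteq> {0,2}" by (simp add: words_upto_def words_def)
    show "ip M (indicator (Cw u)) phi * indicator (Cw u) x =
          complex_of_real ((1/2) ^ length u * indicator (Cw u) x)"
      unfolding ip_Cw_phi[OF u] by (simp add: indicator_def)
  qed
  also have "\<dots> = complex_of_real (\<Sum>u\<in>words_upto m. (1/2) ^ length u * indicator (Cw u) x)"
    by simp
  also have "(\<Sum>u\<in>words_upto m. (1/2) ^ length u * indicator (Cw u) x) =
      (\<Sum>n\<in>{..m}. \<Sum>u\<in>L n. (1/2::real) ^ length u * indicator (Cw u) x)"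
    unfolding words_upto_UN
    by (rule sum.UNION_disjoint) (auto simp: finite_L L_def)
  also have "\<dots> = (\<Sum>n\<le>m. (1/2) ^ n * fn n x)"
  proof (rule sum.cong[OF refl])
    fix n
    have "(\<Sum>u\<in>L n. (1/2::real) ^ length u * indicator (Cw u) x) = (\<Sum>u\<in>L n. (1/2) ^ n * indicator (Cw u) x)"
      by (rule sum.cong[OF refl]) (simp add: L_def)
    then show "(\<Sum>u\<in>L n. (1/2::real) ^ length u * indicator (Cw u) x) = (1/2) ^ n * fn n x"
      by (simp add: fn_def sum_distrib_left)
  qed
  finally show ?thesis .
qed

lemma AE_Kop_phi: "AE x in M. Kop M m phi x = complex_of_real (2 - (1/2) ^ m) * phi x"
proof -
  have "AE x in M. \<forall>n. fn n x = indicator cantor x" using AE_fn by (simp add: AE_all_countable)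
  then show ?thesis
  proof eventually_elim
    case (elim x)
    have "(\<Sum>n\<le>m. (1/2) ^ n * fn n x) = (\<Sum>n\<le>m. (1/2::real) ^ n) * indicator cantor x"
      using elim by (simp add: sum_distrib_right)
    then show ?case unfolding Kop_phi geom phi_real by simp
  qed
qed

end


definition N2 :: "real measure \<Rightarrow> (real \<Rightarrow> complex) \<Rightarrow> real" where
  "N2 M f = (\<integral>x. (cmod (f x))\<^sup>2 \<partial>M)"

lemma l2norm_N2: "l2norm M f = sqrt (N2 M f)" by (simp add: l2norm_def N2_def)

lemma pt_ineq: "(cmod (a + b))\<^sup>2 \<le> 2 * (cmod a)\<^sup>2 + 2 * (cmod b)\<^sup>2"
proof -
  have "cmod (a + b) \<le> cmod a + cmod b" by (rule norm_triangle_ineq)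
  then have "(cmod (a + b))\<^sup>2 \<le> (cmod a + cmod b)\<^sup>2" by (intro power_mono) auto
  also have "\<dots> \<le> 2 * (cmod a)\<^sup>2 + 2 * (cmod b)\<^sup>2"
    using sum_squares_ge_zero[of "cmod a - cmod b" 0] by (simp add: power2_eq_square algebra_simps)
  finally show ?thesis .
qed

lemma cnj_ind: "cnj (indicator A x :: complex) = indicator A x" by (simp add: indicator_def)
lemma cnj_phi: "cnj (phi x) = phi x" by (simp add: phi_def cnj_ind)

lemma N2_nonneg: "0 \<le> N2 M f" unfolding N2_def by (rule integral_nonneg_AE) simp

context cmeas begin

lemma sqint_meas: "sqint M f \<Longrightarrow> f \<in> borel_measurable M" by (simp add: sqint_def)
lemma sqint_int: "sqint M f \<Longrightarrow> integrable M (\<lambda>x. (cmod (f x))\<^sup>2)" by (simp add: sqint_def)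

lemma sqint_add: assumes f: "sqint M f" and g: "sqint M g" shows "sqint M (\<lambda>x. f x + g x)"
proof -
  have mf[measurable]: "f \<in> borel_measurable M" and mg[measurable]: "g \<in> borel_measurable M"
    using f g by (simp_all add: sqint_def)
  have "integrable M (\<lambda>x. 2 * (cmod (f x))\<^sup>2 + 2 * (cmod (g x))\<^sup>2)"
    using sqint_int[OF f] sqint_int[OF g] by simp
  then have "integrable M (\<lambda>x. (cmod (f x + g x))\<^sup>2)"
    by (rule Bochner_Integration.integrable_bound) (auto intro!: AE_I2 simp: pt_ineq order_trans[OF pt_ineq] abs_le_iff)
  then show ?thesis by (simp add: sqint_def)
qed

lemma sqint_scale: assumes f: "sqint M f" shows "sqint M (\<lambda>x. a * f x)"
proof -
  have mf[measurable]: "f \<in> borel_measurable M" using f by (simp add: sqint_def)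
  have "integrable M (\<lambda>x. (cmod a)\<^sup>2 * (cmod (f x))\<^sup>2)"
    using sqint_int[OF f] by simp
  then have "integrable M (\<lambda>x. (cmod (a * f x))\<^sup>2)" by (simp add: norm_mult power_mult_distrib)
  then show ?thesis by (simp add: sqint_def)
qed

lemma sqint_diff: assumes f: "sqint M f" and g: "sqint M g" shows "sqint M (\<lambda>x. f x - g x)"
  using sqint_add[OF f sqint_scale[OF g, of "-1"]] by simp

lemma sqint_bdd: assumes m: "f \<in> borel_measurable M" and b: "\<And>x. cmod (f x) \<le> B"
  shows "sqint M f"
proof -
  have [measurable]: "f \<in> borel_measurable M" by (rule m)
  have "integrable M (\<lambda>x. (cmod (f x))\<^sup>2)"
  proof (rule integrable_const_bound[where B = "B\<^sup>2"])
    show "AE x in M. norm ((cmod (f x))\<^sup>2) \<le> B\<^sup>2"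
      using b by (auto intro!: AE_I2 power_mono)
  qed simp
  then show ?thesis by (simp add: sqint_def m)
qed

lemma meas_phi[measurable]: "phi \<in> borel_measurable M"
  unfolding phi_def by (rule borel_measurable_indicator) (simp add: sets_M borel_cantor)

lemma sqint_phi: "sqint M phi"
  by (rule sqint_bdd[OF meas_phi, of 1]) (simp add: phi_def indicator_def)

lemma N2_add: assumes f: "sqint M f" and g: "sqint M g"
  shows "N2 M (\<lambda>x. f x + g x) \<le> 2 * N2 M f + 2 * N2 M g"
proof -
  have "N2 M (\<lambda>x. f x + g x) \<le> (\<integral>x. 2 * (cmod (f x))\<^sup>2 + 2 * (cmod (g x))\<^sup>2 \<partial>M)"
    unfolding N2_def
    by (rule integral_mono) (use sqint_int[OF sqint_add[OF f g]] sqint_int[OF f] sqint_int[OF g] pt_ineq in auto)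
  also have "\<dots> = 2 * N2 M f + 2 * N2 M g"
    using sqint_int[OF f] sqint_int[OF g] by (simp add: N2_def)
  finally show ?thesis .
qed

lemma N2_scale: "N2 M (\<lambda>x. a * f x) = (cmod a)\<^sup>2 * N2 M f"
  unfolding N2_def by (simp add: norm_mult power_mult_distrib)

lemma N2_zero: assumes f: "sqint M f" and z: "N2 M f = 0" shows "AE x in M. f x = 0"
proof -
  have "AE x in M. (cmod (f x))\<^sup>2 = 0"
    using integral_nonneg_eq_0_iff_AE[OF sqint_int[OF f]] z by (simp add: N2_def)
  then show ?thesis by eventually_elim simp
qed

lemma N2_cong: assumes "f \<in> borel_measurable M" "g \<in> borel_measurable M" "AE x in M. f x = g x"
  shows "N2 M f = N2 M g"
  unfolding N2_def using assms by (intro integral_cong_AE) auto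

lemma zero_crit: assumes f: "sqint M f" and e: "\<And>e. e > 0 \<Longrightarrow> N2 M f \<le> e"
  shows "AE x in M. f x = 0"
proof -
  have "N2 M f \<le> 0" using e by (rule field_le_epsilon) simp
  then have "N2 M f = 0" using N2_nonneg[of M f] by linarith
  then show ?thesis by (rule N2_zero[OF f])
qed

lemma zero_crit2: assumes f: "sqint M f" and C: "0 \<le> C" and e: "\<And>e. e > 0 \<Longrightarrow> N2 M f \<le> e\<^sup>2 * C"
  shows "AE x in M. f x = 0"
proof (rule zero_crit[OF f])
  fix d :: real assume d: "d > 0"
  define e where "e = sqrt (d / (C + 1))"
  have "e > 0" using d C by (simp add: e_def)
  then have "N2 M f \<le> e\<^sup>2 * C" by (rule e)
  also have "e\<^sup>2 = d / (C + 1)" using d C by (simp add: e_def)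
  also have "d / (C + 1) * C \<le> d" using d C by (simp add: field_simps)
  finally show "N2 M f \<le> d" by simp
qed

lemma N2_minus_commute: "N2 M (\<lambda>x. f x - g x) = N2 M (\<lambda>x. g x - f x)"
  unfolding N2_def by (simp add: norm_minus_commute)

lemma N2_phi: "N2 M phi = 1"
proof -
  have "N2 M phi = integral\<^sup>L M (indicator cantor :: real \<Rightarrow> real)"
    unfolding N2_def by (rule Bochner_Integration.integral_cong) (simp_all add: phi_def indicator_def)
  then show ?thesis using integral_cantor by simp
qed

lemma ip_phi_AE: assumes g: "g \<in> borel_measurable M" and ae: "AE x in M. g x = c * phi x"
  shows "ip M phi g = c"
proof -
  have "ip M phi g = (\<integral>x. c * complex_of_real (indicator cantor x) \<partial>M)"
    unfolding ip_def
  proof (rule integral_cong_AE)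
    have [measurable]: "g \<in> borel_measurable M" by (rule g)
    show "(\<lambda>x. cnj (phi x) * g x) \<in> borel_measurable M" unfolding cnj_phi by measurable
    have "(\<lambda>x. c * phi x) \<in> borel_measurable M" by measurable
    then show "(\<lambda>x. c * complex_of_real (indicator cantor x)) \<in> borel_measurable M"
      unfolding phi_real .
    show "AE x in M. cnj (phi x) * g x = c * complex_of_real (indicator cantor x)"
      using ae by eventually_elim (simp add: phi_def indicator_def)
  qed
  also have "\<dots> = c * complex_of_real (integral\<^sup>L M (indicator cantor :: real \<Rightarrow> real))"
    by (simp add: integral_complex_of_real)
  finally show ?thesis using integral_cantor by simp
qed

lemma sqint_L1: assumes f: "sqint M f" shows "integrable M f"
proof (rule Bochner_Integration.integrable_bound)
  show "integrable M (\<lambda>x. 1 + (cmod (f x))\<^sup>2)" using sqint_int[OF f] by simp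
  show "f \<in> borel_measurable M" using f by (simp add: sqint_def)
  show "AE x in M. norm (f x) \<le> norm (1 + (cmod (f x))\<^sup>2)"
  proof (rule AE_I2)
    fix x
    have "cmod (f x) \<le> 1 + (cmod (f x))\<^sup>2"
      using sum_squares_ge_zero[of "cmod (f x) - 1/2" 0] by (simp add: power2_eq_square algebra_simps)
    then show "norm (f x) \<le> norm (1 + (cmod (f x))\<^sup>2)" by simp
  qed
qed

lemma ip_int: assumes f: "sqint M f" and A: "A \<in> sets borel"
  shows "integrable M (\<lambda>x. cnj (indicator A x) * f x)"
proof (rule Bochner_Integration.integrable_bound[OF sqint_L1[OF f]])
  have [measurable]: "f \<in> borel_measurable M" using f by (simp add: sqint_def)
  have [measurable]: "(indicator A :: real \<Rightarrow> complex) \<in> borel_measurable M"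
    by (rule borel_measurable_indicator) (simp add: sets_M A)
  show "(\<lambda>x. cnj (indicator A x) * f x) \<in> borel_measurable M" unfolding cnj_ind by measurable
  show "AE x in M. norm (cnj (indicator A x) * f x) \<le> norm (f x)"
    by (rule AE_I2) (simp add: indicator_def norm_mult)
qed

lemma finite_words_upto: "finite (words_upto m)"
  unfolding words_upto_UN by (auto simp: finite_Ln)

lemma Cw_words_upto: "u \<in> words_upto m \<Longrightarrow> set u \<subseteq> {0,2}"
  by (simp add: words_upto_def words_def)

lemma Kop_add: assumes f: "sqint M f" and g: "sqint M g"
  shows "Kop M m (\<lambda>x. f x + g x) x = Kop M m f x + Kop M m g x"
proof -
  have "ip M (indicator (Cw u)) (\<lambda>x. f x + g x) = ip M (indicator (Cw u)) f + ip M (indicator (Cw u)) g" for u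
    unfolding ip_def using ip_int[OF f borel_Cw] ip_int[OF g borel_Cw]
    by (simp add: distrib_left)
  then show ?thesis unfolding Kop_def by (simp add: distrib_right sum.distrib)
qed

lemma Kop_scale: "Kop M m (\<lambda>x. a * f x) x = a * Kop M m f x"
proof -
  have "ip M (indicator (Cw u)) (\<lambda>x. a * f x) = a * ip M (indicator (Cw u)) f" for u
  proof -
    have "ip M (indicator (Cw u)) (\<lambda>x. a * f x) = (\<integral>x. a * (cnj (indicator (Cw u) x) * f x) \<partial>M)"
      unfolding ip_def by (simp add: ac_simps)
    then show ?thesis unfolding ip_def by (simp add: integral_mult_right_zero)
  qed
  then show ?thesis unfolding Kop_def by (simp add: sum_distrib_left ac_simps)
qed

lemma Kop_cong: assumes "f \<in> borel_measurable M" "g \<in> borel_measurable M" "AE x in M. f x = g x"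
  shows "Kop M m f = Kop M m g"
proof -
  have "ip M (indicator (Cw u)) f = ip M (indicator (Cw u)) g" for u
  proof -
    have [measurable]: "(indicator (Cw u) :: real \<Rightarrow> complex) \<in> borel_measurable M"
      by (rule borel_measurable_indicator) (simp add: sets_M borel_Cw)
    have [measurable]: "f \<in> borel_measurable M" "g \<in> borel_measurable M" using assms by auto
    show ?thesis unfolding ip_def cnj_ind using assms(3) by (intro integral_cong_AE) auto
  qed
  then show ?thesis unfolding Kop_def by simp
qed

lemma Kop_meas[measurable]: "Kop M m f \<in> borel_measurable M"
proof -
  have [measurable]: "(indicator (Cw u) :: real \<Rightarrow> complex) \<in> borel_measurable M" for u
    by (rule borel_measurable_indicator) (simp add: sets_M borel_Cw)
  show ?thesis unfolding Kop_def by measurable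
qed

lemma ip_bound: assumes f: "sqint M f" and A: "A \<in> sets borel"
  shows "cmod (ip M (indicator A) f) \<le> (\<integral>x. cmod (f x) \<partial>M)"
proof -
  have "cmod (ip M (indicator A) f) \<le> (\<integral>x. cmod (cnj (indicator A x) * f x) \<partial>M)"
    unfolding ip_def by (rule integral_norm_bound)
  also have "\<dots> \<le> (\<integral>x. cmod (f x) \<partial>M)"
    by (rule integral_mono[OF integrable_norm[OF ip_int[OF f A]] integrable_norm[OF sqint_L1[OF f]]])
      (simp add: indicator_def norm_mult)
  finally show ?thesis .
qed

lemma Kop_bound: assumes f: "sqint M f"
  shows "cmod (Kop M m f x) \<le> real (card (words_upto m)) * (\<integral>x. cmod (f x) \<partial>M)"
proof -
  have "cmod (Kop M m f x) \<le> (\<Sum>u\<in>words_upto m. cmod (ip M (indicator (Cw u)) f * indicator (Cw u) x))"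
    unfolding Kop_def by (rule norm_sum)
  also have "\<dots> \<le> (\<Sum>u\<in>words_upto m. (\<integral>x. cmod (f x) \<partial>M))"
  proof (rule sum_mono)
    fix u
    have "cmod (ip M (indicator (Cw u)) f * indicator (Cw u) x) \<le> cmod (ip M (indicator (Cw u)) f)"
      by (simp add: norm_mult indicator_def)
    then show "cmod (ip M (indicator (Cw u)) f * indicator (Cw u) x) \<le> (\<integral>x. cmod (f x) \<partial>M)"
      using ip_bound[OF f borel_Cw[of u]] by linarith
  qed
  also have "\<dots> = real (card (words_upto m)) * (\<integral>x. cmod (f x) \<partial>M)" by simp
  finally show ?thesis .
qed

lemma L1_L2: assumes f: "sqint M f" shows "(\<integral>x. cmod (f x) \<partial>M)\<^sup>2 \<le> N2 M f"
proof -
  have i1: "integrable M (\<lambda>x. cmod (f x))" using sqint_L1[OF f] by simp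
  have "0 \<le> (\<integral>x. (cmod (f x) - (\<integral>x. cmod (f x) \<partial>M))\<^sup>2 \<partial>M)" by (rule integral_nonneg_AE) simp
  also have "\<dots> = (\<integral>x. (cmod (f x))\<^sup>2 \<partial>M) - (\<integral>x. cmod (f x) \<partial>M)\<^sup>2"
    by (rule variance_eq[OF i1]) (use sqint_int[OF f] in simp)
  finally show ?thesis by (simp add: N2_def)
qed

lemma sqint_Kop: assumes f: "sqint M f" shows "sqint M (Kop M m f)"
  by (rule sqint_bdd[OF Kop_meas Kop_bound[OF f]])

lemma N2_Kop: assumes f: "sqint M f"
  shows "N2 M (Kop M m f) \<le> (real (card (words_upto m)))\<^sup>2 * N2 M f"
proof -
  let ?c = "real (card (words_upto m)) * (\<integral>x. cmod (f x) \<partial>M)"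
  have c0: "0 \<le> ?c" by (simp add: integral_nonneg_AE)
  have "N2 M (Kop M m f) \<le> (\<integral>x. ?c\<^sup>2 \<partial>M)"
    unfolding N2_def
    by (rule integral_mono) (use sqint_int[OF sqint_Kop[OF f]] Kop_bound[OF f] in \<open>auto intro!: power_mono\<close>)
  also have "\<dots> = ?c\<^sup>2" by (simp add: prob_space)
  also have "\<dots> = (real (card (words_upto m)))\<^sup>2 * (\<integral>x. cmod (f x) \<partial>M)\<^sup>2" by (simp add: power_mult_distrib)
  also have "\<dots> \<le> (real (card (words_upto m)))\<^sup>2 * N2 M f"
    by (rule mult_left_mono[OF L1_L2[OF f]]) simp
  finally show ?thesis .
qed

end


locale kinf = cmeas + fixes K :: "(real \<Rightarrow> complex) \<Rightarrow> (real \<Rightarrow> complex)"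
  assumes kinf: "is_Kinf M K"

context kinf begin

lemma K_sq: "sqint M f \<Longrightarrow> sqint M (K f)" using kinf by (simp add: is_Kinf_def)

lemma K_meas: "sqint M f \<Longrightarrow> K f \<in> borel_measurable M" using K_sq sqint_meas by blast

lemma K_approx_unif: assumes e: "e > 0"
  shows "\<exists>N. \<forall>m\<ge>N. \<forall>f. sqint M f \<longrightarrow> N2 M (\<lambda>x. Kop M m f x - K f x) \<le> e\<^sup>2 * N2 M f"
proof -
  obtain N where N: "\<forall>m\<ge>N. \<forall>f. sqint M f \<longrightarrow> l2norm M (\<lambda>x. Kop M m f x - K f x) \<le> e * l2norm M f"
    using kinf e unfolding is_Kinf_def by blast
  show ?thesis
  proof (intro exI allI impI)
    fix m f assume m: "N \<le> m" and f: "sqint M f"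
    have "sqrt (N2 M (\<lambda>x. Kop M m f x - K f x)) \<le> e * sqrt (N2 M f)"
      using N m f by (simp add: l2norm_N2)
    also have "e * sqrt (N2 M f) = sqrt (e\<^sup>2 * N2 M f)" using e by (simp add: real_sqrt_mult)
    finally show "N2 M (\<lambda>x. Kop M m f x - K f x) \<le> e\<^sup>2 * N2 M f" by simp
  qed
qed

lemma K_approx: assumes f: "sqint M f" and e: "e > 0"
  shows "\<exists>N. \<forall>m\<ge>N. N2 M (\<lambda>x. Kop M m f x - K f x) \<le> e\<^sup>2 * N2 M f"
  using K_approx_unif[OF e] f by blast

lemma N2_KmK: assumes "sqint M f" shows "N2 M (\<lambda>x. K f x - Kop M m f x) = N2 M (\<lambda>x. Kop M m f x - K f x)"
  by (rule N2_minus_commute)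

lemma K_phi_gen: assumes f: "sqint M f" and ae: "AE x in M. f x = c * phi x"
  shows "AE x in M. K f x = 2 * c * phi x"
proof -
  let ?h = "\<lambda>x. K f x - 2 * c * phi x"
  have sh: "sqint M ?h" using sqint_diff[OF K_sq[OF f] sqint_scale[OF sqint_phi, of "2*c"]] by simp
  have mf[measurable]: "f \<in> borel_measurable M" using f by (simp add: sqint_def)
  have mK[measurable]: "K f \<in> borel_measurable M" using K_meas[OF f] .
  have Kf_eq: "Kop M m f = (\<lambda>x. c * Kop M m phi x)" for m
  proof -
    have "Kop M m f = Kop M m (\<lambda>x. c * phi x)"
      by (rule Kop_cong[OF mf _ ae]) measurable
    then show ?thesis by (simp add: Kop_scale fun_eq_iff)
  qed
  have ae2: "AE x in M. Kop M m f x - 2 * c * phi x = (- (c * (1/2)^m)) * phi x" for m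
    using AE_Kop_phi[of m]
  proof eventually_elim
    case (elim x)
    have "Kop M m f x = c * (complex_of_real (2 - (1/2)^m) * phi x)" using elim Kf_eq by simp
    then show ?case by (simp add: algebra_simps)
  qed
  have N2b: "N2 M (\<lambda>x. Kop M m f x - 2 * c * phi x) = (cmod c)\<^sup>2 * ((1/2)^m)\<^sup>2" for m
  proof -
    have "N2 M (\<lambda>x. Kop M m f x - 2 * c * phi x) = N2 M (\<lambda>x. (- (c * (1/2)^m)) * phi x)"
      by (rule N2_cong[OF _ _ ae2]) measurable
    also have "\<dots> = (cmod c)\<^sup>2 * ((1/2)^m)\<^sup>2"
      by (subst N2_scale) (simp add: N2_phi norm_mult norm_power power_mult_distrib)
    finally show ?thesis .
  qed
  have bound: "N2 M ?h \<le> 2 * N2 M (\<lambda>x. Kop M m f x - K f x) + 2 * ((cmod c)\<^sup>2 * ((1/2)^m)\<^sup>2)" for m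
  proof -
    have eq: "?h = (\<lambda>x. (K f x - Kop M m f x) + (Kop M m f x - 2 * c * phi x))" by (rule ext) simp
    have "N2 M ?h \<le> 2 * N2 M (\<lambda>x. K f x - Kop M m f x) + 2 * N2 M (\<lambda>x. Kop M m f x - 2 * c * phi x)"
      unfolding eq
      by (rule N2_add[OF sqint_diff[OF K_sq[OF f] sqint_Kop[OF f]] sqint_diff[OF sqint_Kop[OF f] sqint_scale[OF sqint_phi]]])
    then show ?thesis unfolding N2b N2_KmK[OF f] .
  qed
  have "AE x in M. ?h x = 0"
  proof (rule zero_crit[OF sh])
    fix \<epsilon> :: real assume eps: "\<epsilon> > 0"
    define e where "e = sqrt (\<epsilon> / (4 * (N2 M f + 1)))"
    have N2f: "0 \<le> N2 M f" by (rule N2_nonneg)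
    have e0: "e > 0" using eps N2f by (simp add: e_def)
    have e2: "e\<^sup>2 = \<epsilon> / (4 * (N2 M f + 1))" using eps N2f by (simp add: e_def)
    obtain N where N: "\<forall>m\<ge>N. N2 M (\<lambda>x. Kop M m f x - K f x) \<le> e\<^sup>2 * N2 M f"
      using K_approx[OF f e0] by blast
    have "4 * ((cmod c)\<^sup>2 + 1) > 0" by (simp add: add_nonneg_pos)
    then have "\<epsilon> / (4 * ((cmod c)\<^sup>2 + 1)) > 0" using eps by (rule divide_pos_pos[rotated])
    then obtain n0 where n0: "(1/2::real) ^ n0 < \<epsilon> / (4 * ((cmod c)\<^sup>2 + 1))"
      using real_arch_pow_inv[of _ "1/2::real"] by auto
    define m where "m = max N n0"
    have p1: "(1/2::real) ^ m \<le> (1/2) ^ n0" unfolding m_def by (rule power_decreasing) auto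
    have p0: "0 \<le> (1/2::real) ^ m" "(1/2::real) ^ m \<le> 1" by (auto simp: power_le_one)
    have p2: "((1/2::real) ^ m)\<^sup>2 \<le> (1/2) ^ m"
      using mult_left_mono[OF p0(2) p0(1)] by (simp add: power2_eq_square)
    have A: "2 * N2 M (\<lambda>x. Kop M m f x - K f x) \<le> \<epsilon> / 2"
    proof -
      have "N2 M (\<lambda>x. Kop M m f x - K f x) \<le> e\<^sup>2 * N2 M f" using N m_def by simp
      also have "\<dots> = \<epsilon> * N2 M f / (4 * (N2 M f + 1))" unfolding e2 by simp
      also have "\<dots> \<le> \<epsilon> / 4" using eps N2f by (simp add: field_simps)
      finally show ?thesis by simp
    qed
    have B: "2 * ((cmod c)\<^sup>2 * ((1/2)^m)\<^sup>2) \<le> \<epsilon> / 2"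
    proof -
      have c0: "0 \<le> (cmod c)\<^sup>2" by simp
      have "(cmod c)\<^sup>2 * ((1/2)^m)\<^sup>2 \<le> (cmod c)\<^sup>2 * (\<epsilon> / (4 * ((cmod c)\<^sup>2 + 1)))"
        using p1 p2 n0 by (intro mult_left_mono[OF _ c0]) linarith
      also have "\<dots> \<le> \<epsilon> / 4"
      proof -
        define k where "k = (cmod c)\<^sup>2"
        have k0: "0 \<le> k" using c0 by (simp add: k_def)
        have "k * (\<epsilon> / (4 * (k + 1))) = (\<epsilon> / 4) * (k / (k + 1))" by (simp add: field_simps)
        also have "\<dots> \<le> (\<epsilon> / 4) * 1"
          by (rule mult_left_mono) (use eps k0 in auto)
        finally show ?thesis by (simp add: k_def)
      qed
      finally show ?thesis by simp
    qed
    show "N2 M ?h \<le> \<epsilon>" using bound[of m] A B by linarith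
  qed
  then show ?thesis by eventually_elim simp
qed

end


context kinf begin

lemma K_cong: assumes f: "sqint M f" and g: "sqint M g" and ae: "AE x in M. f x = g x"
  shows "AE x in M. K f x = K g x"
proof -
  let ?h = "\<lambda>x. K f x - K g x"
  have sh: "sqint M ?h" by (rule sqint_diff[OF K_sq[OF f] K_sq[OF g]])
  have "AE x in M. ?h x = 0"
  proof (rule zero_crit2[OF sh, of "2 * N2 M f + 2 * N2 M g"])
    show "0 \<le> 2 * N2 M f + 2 * N2 M g" using N2_nonneg[of M f] N2_nonneg[of M g] by simp
    fix e :: real assume e: "e > 0"
    obtain N where N: "\<forall>m\<ge>N. \<forall>f. sqint M f \<longrightarrow> N2 M (\<lambda>x. Kop M m f x - K f x) \<le> e\<^sup>2 * N2 M f"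
      using K_approx_unif[OF e] by blast
    have kc: "Kop M N f = Kop M N g" by (rule Kop_cong[OF sqint_meas[OF f] sqint_meas[OF g] ae])
    have eq: "?h = (\<lambda>x. (K f x - Kop M N f x) + (Kop M N g x - K g x))" by (rule ext) (simp add: kc)
    have "N2 M ?h \<le> 2 * N2 M (\<lambda>x. K f x - Kop M N f x) + 2 * N2 M (\<lambda>x. Kop M N g x - K g x)"
      unfolding eq by (rule N2_add[OF sqint_diff[OF K_sq[OF f] sqint_Kop[OF f]] sqint_diff[OF sqint_Kop[OF g] K_sq[OF g]]])
    also have "\<dots> \<le> 2 * (e\<^sup>2 * N2 M f) + 2 * (e\<^sup>2 * N2 M g)"
      using N f g unfolding N2_KmK[OF f] by (intro add_mono mult_left_mono) auto
    finally show "N2 M ?h \<le> e\<^sup>2 * (2 * N2 M f + 2 * N2 M g)" by (simp add: algebra_simps)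
  qed
  then show ?thesis by eventually_elim simp
qed

lemma K_add: assumes f: "sqint M f" and g: "sqint M g"
  shows "AE x in M. K (\<lambda>y. f y + g y) x = K f x + K g x"
proof -
  let ?F = "\<lambda>y. f y + g y"
  have sF: "sqint M ?F" by (rule sqint_add[OF f g])
  let ?h = "\<lambda>x. K ?F x - (K f x + K g x)"
  have sh: "sqint M ?h" by (rule sqint_diff[OF K_sq[OF sF] sqint_add[OF K_sq[OF f] K_sq[OF g]]])
  have "AE x in M. ?h x = 0"
  proof (rule zero_crit2[OF sh, of "2 * N2 M ?F + 4 * N2 M f + 4 * N2 M g"])
    show "0 \<le> 2 * N2 M ?F + 4 * N2 M f + 4 * N2 M g"
      using N2_nonneg[of M f] N2_nonneg[of M g] N2_nonneg[of M ?F] by simp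
    fix e :: real assume e: "e > 0"
    obtain N where N: "\<forall>m\<ge>N. \<forall>f. sqint M f \<longrightarrow> N2 M (\<lambda>x. Kop M m f x - K f x) \<le> e\<^sup>2 * N2 M f"
      using K_approx_unif[OF e] by blast
    have eq: "?h = (\<lambda>x. (K ?F x - Kop M N ?F x) + ((Kop M N f x - K f x) + (Kop M N g x - K g x)))"
      by (rule ext) (simp add: Kop_add[OF f g] algebra_simps)
    have s1: "sqint M (\<lambda>x. K ?F x - Kop M N ?F x)" by (rule sqint_diff[OF K_sq[OF sF] sqint_Kop[OF sF]])
    have s2: "sqint M (\<lambda>x. Kop M N f x - K f x)" by (rule sqint_diff[OF sqint_Kop[OF f] K_sq[OF f]])
    have s3: "sqint M (\<lambda>x. Kop M N g x - K g x)" by (rule sqint_diff[OF sqint_Kop[OF g] K_sq[OF g]])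
    have "N2 M ?h \<le> 2 * N2 M (\<lambda>x. K ?F x - Kop M N ?F x) +
        2 * N2 M (\<lambda>x. (Kop M N f x - K f x) + (Kop M N g x - K g x))"
      unfolding eq by (rule N2_add[OF s1 sqint_add[OF s2 s3]])
    also have "\<dots> \<le> 2 * N2 M (\<lambda>x. K ?F x - Kop M N ?F x) +
        2 * (2 * N2 M (\<lambda>x. Kop M N f x - K f x) + 2 * N2 M (\<lambda>x. Kop M N g x - K g x))"
      using N2_add[OF s2 s3] by simp
    also have "\<dots> \<le> 2 * (e\<^sup>2 * N2 M ?F) + 2 * (2 * (e\<^sup>2 * N2 M f) + 2 * (e\<^sup>2 * N2 M g))"
      using N f g sF unfolding N2_KmK[OF sF] by (intro add_mono mult_left_mono) auto
    finally show "N2 M ?h \<le> e\<^sup>2 * (2 * N2 M ?F + 4 * N2 M f + 4 * N2 M g)" by (simp add: algebra_simps)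
  qed
  then show ?thesis by eventually_elim simp
qed

lemma K_scale: assumes f: "sqint M f"
  shows "AE x in M. K (\<lambda>y. a * f y) x = a * K f x"
proof -
  let ?F = "\<lambda>y. a * f y"
  have sF: "sqint M ?F" by (rule sqint_scale[OF f])
  let ?h = "\<lambda>x. K ?F x - a * K f x"
  have sh: "sqint M ?h" by (rule sqint_diff[OF K_sq[OF sF] sqint_scale[OF K_sq[OF f]]])
  have "AE x in M. ?h x = 0"
  proof (rule zero_crit2[OF sh, of "2 * N2 M ?F + 2 * (cmod a)\<^sup>2 * N2 M f"])
    show "0 \<le> 2 * N2 M ?F + 2 * (cmod a)\<^sup>2 * N2 M f"
      using N2_nonneg[of M f] N2_nonneg[of M ?F] by simp
    fix e :: real assume e: "e > 0"
    obtain N where N: "\<forall>m\<ge>N. \<forall>f. sqint M f \<longrightarrow> N2 M (\<lambda>x. Kop M m f x - K f x) \<le> e\<^sup>2 * N2 M f"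
      using K_approx_unif[OF e] by blast
    have eq: "?h = (\<lambda>x. (K ?F x - Kop M N ?F x) + a * (Kop M N f x - K f x))"
      by (rule ext) (simp add: Kop_scale algebra_simps)
    have s1: "sqint M (\<lambda>x. K ?F x - Kop M N ?F x)" by (rule sqint_diff[OF K_sq[OF sF] sqint_Kop[OF sF]])
    have s2: "sqint M (\<lambda>x. Kop M N f x - K f x)" by (rule sqint_diff[OF sqint_Kop[OF f] K_sq[OF f]])
    have "N2 M ?h \<le> 2 * N2 M (\<lambda>x. K ?F x - Kop M N ?F x) + 2 * N2 M (\<lambda>x. a * (Kop M N f x - K f x))"
      unfolding eq by (rule N2_add[OF s1 sqint_scale[OF s2]])
    also have "\<dots> = 2 * N2 M (\<lambda>x. K ?F x - Kop M N ?F x) + 2 * ((cmod a)\<^sup>2 * N2 M (\<lambda>x. Kop M N f x - K f x))"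
      by (simp add: N2_scale)
    also have "\<dots> \<le> 2 * (e\<^sup>2 * N2 M ?F) + 2 * ((cmod a)\<^sup>2 * (e\<^sup>2 * N2 M f))"
      using N f sF unfolding N2_KmK[OF sF] by (intro add_mono mult_left_mono) auto
    finally show "N2 M ?h \<le> e\<^sup>2 * (2 * N2 M ?F + 2 * (cmod a)\<^sup>2 * N2 M f)" by (simp add: algebra_simps)
  qed
  then show ?thesis by eventually_elim simp
qed

lemma K_bound: "\<exists>B\<ge>0. \<forall>f. sqint M f \<longrightarrow> N2 M (K f) \<le> B * N2 M f"
proof -
  obtain N where N: "\<forall>m\<ge>N. \<forall>f. sqint M f \<longrightarrow> N2 M (\<lambda>x. Kop M m f x - K f x) \<le> 1\<^sup>2 * N2 M f"
    using K_approx_unif[of 1] by auto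
  define c where "c = (real (card (words_upto N)))\<^sup>2"
  show ?thesis
  proof (intro exI[of _ "2 + 2 * c"] conjI allI impI)
    show "0 \<le> 2 + 2 * c" by (simp add: c_def)
    fix f assume f: "sqint M f"
    have eq: "K f = (\<lambda>x. (K f x - Kop M N f x) + Kop M N f x)" by (rule ext) simp
    have "N2 M (K f) \<le> 2 * N2 M (\<lambda>x. K f x - Kop M N f x) + 2 * N2 M (Kop M N f)"
      by (subst eq) (rule N2_add[OF sqint_diff[OF K_sq[OF f] sqint_Kop[OF f]] sqint_Kop[OF f]])
    also have "\<dots> \<le> 2 * N2 M f + 2 * (c * N2 M f)"
      using N f N2_Kop[OF f, of N] unfolding N2_KmK[OF f] c_def by (intro add_mono mult_left_mono) auto
    finally show "N2 M (K f) \<le> (2 + 2 * c) * N2 M f" by (simp add: algebra_simps)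
  qed
qed

end


context kinf begin

definition Tq :: "(real \<Rightarrow> complex) \<Rightarrow> (real \<Rightarrow> complex)" where
  "Tq g = (\<lambda>x. K (K g) x + (-4) * K g x + 4 * g x)"

lemma sqint_Tq: "sqint M g \<Longrightarrow> sqint M (Tq g)"
  unfolding Tq_def
  by (rule sqint_add[OF sqint_add[OF K_sq[OF K_sq] sqint_scale[OF K_sq]] sqint_scale]) auto

lemma K_zero: assumes g: "sqint M g" and B: "\<forall>f. sqint M f \<longrightarrow> N2 M (K f) \<le> B * N2 M f"
  and z: "N2 M g = 0" shows "N2 M (K g) = 0"
  using B g z N2_nonneg[of M "K g"] by (metis mult_zero_right order_antisym)

lemma fcalc_exists:
  "\<exists>R>2. is_fcalc M K (\<lambda>t. complex_of_real ((max (-R) (min R t) - 2)\<^sup>2)) Tq"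
proof -
  obtain B where B0: "B \<ge> 0" and B: "\<forall>f. sqint M f \<longrightarrow> N2 M (K f) \<le> B * N2 M f"
    using K_bound by blast
  define R where "R = sqrt B + 3"
  have "sqrt B \<ge> 0" using B0 by simp
  then have R2: "R > 2" unfolding R_def by linarith
  let ?f = "\<lambda>t. complex_of_real ((max (-R) (min R t) - 2)\<^sup>2)"
  have "is_fcalc M K ?f Tq"
    unfolding is_fcalc_def
  proof (intro conjI allI impI)
    fix g assume g: "sqint M g"
    show "sqint M (Tq g)" by (rule sqint_Tq[OF g])
  next
    define C where "C = 4 * B\<^sup>2 + 64 * B + 32"
    show "\<exists>c. \<forall>g. sqint M g \<longrightarrow> l2norm M (Tq g) \<le> c * l2norm M g"
    proof (intro exI allI impI)
      fix g assume g: "sqint M g"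
      have s1: "sqint M (K (K g))" "sqint M (K g)" using K_sq g by auto
      have "N2 M (Tq g) \<le> 2 * N2 M (\<lambda>x. K (K g) x + (-4) * K g x) + 2 * N2 M (\<lambda>x. 4 * g x)"
        unfolding Tq_def by (rule N2_add[OF sqint_add[OF s1(1) sqint_scale[OF s1(2)]] sqint_scale[OF g]])
      also have "\<dots> \<le> 2 * (2 * N2 M (K (K g)) + 2 * N2 M (\<lambda>x. (-4) * K g x)) + 2 * N2 M (\<lambda>x. 4 * g x)"
        using N2_add[OF s1(1) sqint_scale[OF s1(2)], of "-4"] by simp
      also have "\<dots> = 4 * N2 M (K (K g)) + 64 * N2 M (K g) + 32 * N2 M g"
      proof -
        have h4: "N2 M (\<lambda>x. (-4) * K g x) = 16 * N2 M (K g)" using N2_scale[of "-4" "K g"] by simp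
        have h5: "N2 M (\<lambda>x. 4 * g x) = 16 * N2 M g" using N2_scale[of 4 g] by simp
        show ?thesis unfolding h4 h5 by simp
      qed
      also have "\<dots> \<le> 4 * (B * (B * N2 M g)) + 64 * (B * N2 M g) + 32 * N2 M g"
      proof -
        have "N2 M (K (K g)) \<le> B * N2 M (K g)" using B s1 by auto
        also have "\<dots> \<le> B * (B * N2 M g)" using B g B0 by (intro mult_left_mono) auto
        finally show ?thesis using B g by (intro add_mono mult_left_mono) auto
      qed
      also have "\<dots> = C * N2 M g" by (simp add: C_def algebra_simps power2_eq_square)
      finally have "N2 M (Tq g) \<le> C * N2 M g" .
      then have "sqrt (N2 M (Tq g)) \<le> sqrt (C * N2 M g)" by simp
      also have "\<dots> = sqrt C * sqrt (N2 M g)" by (simp add: real_sqrt_mult)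
      finally show "l2norm M (Tq g) \<le> sqrt C * l2norm M g" by (simp add: l2norm_N2)
    qed
  next
    fix g h assume g: "sqint M g" and h: "sqint M h"
    have a1: "AE x in M. K (\<lambda>y. g y + h y) x = K g x + K h x" by (rule K_add[OF g h])
    have a2: "AE x in M. K (K (\<lambda>y. g y + h y)) x = K (\<lambda>y. K g y + K h y) x"
      by (rule K_cong[OF K_sq[OF sqint_add[OF g h]] sqint_add[OF K_sq[OF g] K_sq[OF h]] a1])
    have a3: "AE x in M. K (\<lambda>y. K g y + K h y) x = K (K g) x + K (K h) x"
      by (rule K_add[OF K_sq[OF g] K_sq[OF h]])
    show "AE x in M. Tq (\<lambda>y. g y + h y) x = Tq g x + Tq h x"
      using a1 a2 a3 by eventually_elim (simp add: Tq_def algebra_simps)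
  next
    fix a g assume g: "sqint M g"
    have a1: "AE x in M. K (\<lambda>y. a * g y) x = a * K g x" by (rule K_scale[OF g])
    have a2: "AE x in M. K (K (\<lambda>y. a * g y)) x = K (\<lambda>y. a * K g y) x"
      by (rule K_cong[OF K_sq[OF sqint_scale[OF g]] sqint_scale[OF K_sq[OF g]] a1])
    have a3: "AE x in M. K (\<lambda>y. a * K g y) x = a * K (K g) x"
      by (rule K_scale[OF K_sq[OF g]])
    show "AE x in M. Tq (\<lambda>y. a * g y) x = a * Tq g x"
      using a1 a2 a3 by eventually_elim (simp add: Tq_def algebra_simps)
  next
    fix lam :: real and g assume g: "sqint M g" and ev: "AE x in M. K g x = complex_of_real lam * g x"
    show "AE x in M. Tq g x = ?f lam * g x"
    proof (cases "N2 M g = 0")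
      case True
      have z0: "AE x in M. g x = 0" by (rule N2_zero[OF g True])
      have z1: "AE x in M. K g x = 0" by (rule N2_zero[OF K_sq[OF g] K_zero[OF g B True]])
      have z2: "AE x in M. K (K g) x = 0"
        by (rule N2_zero[OF K_sq[OF K_sq[OF g]] K_zero[OF K_sq[OF g] B K_zero[OF g B True]]])
      show ?thesis using z0 z1 z2 by eventually_elim (simp add: Tq_def)
    next
      case False
      then have pos: "N2 M g > 0" using N2_nonneg[of M g] by linarith
      have "N2 M (K g) = N2 M (\<lambda>x. complex_of_real lam * g x)"
        by (rule N2_cong[OF K_meas[OF g] _ ev]) (use sqint_meas[OF g] in measurable)
      also have "\<dots> = lam\<^sup>2 * N2 M g" by (simp add: N2_scale)
      finally have "lam\<^sup>2 * N2 M g \<le> B * N2 M g" using B g by auto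
      then have "lam\<^sup>2 \<le> B" using pos by simp
      then have "\<bar>lam\<bar> \<le> sqrt B" using real_sqrt_le_mono by fastforce
      then have "-R \<le> lam" "lam \<le> R" unfolding R_def by (auto simp: abs_le_iff)
      then have "max (-R) (min R lam) = lam" by simp
      then have fl: "?f lam = complex_of_real ((lam - 2)\<^sup>2)" by simp
      have a1: "AE x in M. K (K g) x = K (\<lambda>y. complex_of_real lam * g y) x"
        by (rule K_cong[OF K_sq[OF g] sqint_scale[OF g] ev])
      have a2: "AE x in M. K (\<lambda>y. complex_of_real lam * g y) x = complex_of_real lam * K g x"
        by (rule K_scale[OF g])
      show ?thesis using a1 a2 ev
      proof eventually_elim
        case (elim x)
        then have "Tq g x = (complex_of_real lam)\<^sup>2 * g x + (-4) * (complex_of_real lam * g x) + 4 * g x"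
          by (simp add: Tq_def power2_eq_square)
        also have "\<dots> = complex_of_real ((lam - 2)\<^sup>2) * g x"
          by (simp add: power2_eq_square algebra_simps)
        finally show ?case unfolding fl .
      qed
    qed
  qed
  then show ?thesis using R2 by blast
qed

end

theorem corollary7p5:
  fixes M :: "real measure"
    and K :: "(real \<Rightarrow> complex) \<Rightarrow> (real \<Rightarrow> complex)"
  assumes "cantor_measure M"
    and "is_Kinf M K"
  shows "(AE x in M. K phi x = 2 * phi x) \<and>
         (\<forall>n::nat. ip M phi ((K ^^ n) phi) = 2 ^ n) \<and>
         (\<forall>nu. is_spectral_measure M K phi nu \<longleftrightarrow> nu = return borel (2::real))"
proof -
  interpret kinf M K by unfold_locales (rule assms)+
  have P1: "AE x in M. K phi x = 2 * phi x"
    using K_phi_gen[OF sqint_phi, of 1] by simp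
  have Pn: "sqint M ((K ^^ n) phi) \<and> (AE x in M. (K ^^ n) phi x = 2 ^ n * phi x)" for n
  proof (induction n)
    case 0 then show ?case using sqint_phi by simp
  next
    case (Suc n)
    then have s: "sqint M ((K ^^ n) phi)" and a: "AE x in M. (K ^^ n) phi x = 2 ^ n * phi x" by auto
    have "AE x in M. K ((K ^^ n) phi) x = 2 * 2 ^ n * phi x" by (rule K_phi_gen[OF s a])
    then show ?case using K_sq[OF s] by simp
  qed
  have P2: "ip M phi ((K ^^ n) phi) = 2 ^ n" for n
    using Pn[of n] by (intro ip_phi_AE) (auto intro: sqint_meas)
  have P3: "is_spectral_measure M K phi nu \<longleftrightarrow> nu = return borel (2::real)" for nu
  proof
    assume sm: "is_spectral_measure M K phi nu"
    then have snu: "sets nu = sets borel" and fnu: "finite_measure nu"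
      and spec: "\<And>f T. f \<in> borel_measurable borel \<Longrightarrow> bounded (range f) \<Longrightarrow> is_fcalc M K f T \<Longrightarrow>
        ip M phi (T phi) = (\<integral>t. f t \<partial>nu)"
      unfolding is_spectral_measure_def by auto
    interpret nu: finite_measure nu by (rule fnu)
    have spnu: "space nu = UNIV" using sets_eq_imp_space_eq[OF snu] by simp
    have mnu: "measurable nu = measurable borel" by (rule ext measurable_cong_sets snu refl)+
    have "is_fcalc M K (\<lambda>_. 1) (\<lambda>g. g)"
      unfolding is_fcalc_def by (auto intro!: exI[of _ 1])
    then have "ip M phi phi = (\<integral>t. 1 \<partial>nu)" using spec[of "\<lambda>_. 1" "\<lambda>g. g"] by simp
    moreover have "ip M phi phi = 1" by (rule ip_phi_AE[OF meas_phi]) simp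
    ultimately have tot: "measure nu UNIV = 1" using spnu by (simp add: scaleR_conv_of_real)
    obtain R where R2: "R > 2" and fc: "is_fcalc M K (\<lambda>t. complex_of_real ((max (-R) (min R t) - 2)\<^sup>2)) Tq"
      using fcalc_exists by blast
    let ?r = "\<lambda>t. (max (-R) (min R t) - 2)\<^sup>2"
    have rmeas: "?r \<in> borel_measurable borel" by measurable
    have fmeas: "(\<lambda>t. complex_of_real (?r t)) \<in> borel_measurable borel" using rmeas by measurable
    have rb: "\<bar>?r t\<bar> \<le> (R + 2)\<^sup>2" for t
    proof -
      have "\<bar>max (-R) (min R t) - 2\<bar> \<le> R + 2" using R2 by (auto simp: max_def min_def)
      then have "\<bar>max (-R) (min R t) - 2\<bar>\<^sup>2 \<le> (R + 2)\<^sup>2" by (intro power_mono) auto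
      then show ?thesis by simp
    qed
    have fb: "bounded (range (\<lambda>t. complex_of_real (?r t)))"
      unfolding bounded_iff
    proof (intro exI ballI)
      fix z assume "z \<in> range (\<lambda>t. complex_of_real (?r t))"
      then obtain t where t: "z = complex_of_real (?r t)" by blast
      have "norm z = \<bar>?r t\<bar>" unfolding t by (rule norm_of_real)
      then show "norm z \<le> (R + 2)\<^sup>2" using rb[of t] by simp
    qed
    have eqA: "ip M phi (Tq phi) = (\<integral>t. complex_of_real (?r t) \<partial>nu)" by (rule spec[OF fmeas fb fc])
    have eqB: "ip M phi (Tq phi) = 0"
    proof (rule ip_phi_AE)
      show "Tq phi \<in> borel_measurable M" using sqint_Tq[OF sqint_phi] by (rule sqint_meas)
      have "AE x in M. Tq phi x = complex_of_real (?r 2) * phi x"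
        using fc sqint_phi P1 unfolding is_fcalc_def by auto
      moreover have "?r 2 = 0" using R2 by (simp add: max_def min_def)
      ultimately show "AE x in M. Tq phi x = 0 * phi x" by simp
    qed
    have "complex_of_real (\<integral>t. ?r t \<partial>nu) = 0"
      using eqA eqB integral_complex_of_real[of nu ?r] by metis
    then have i0: "(\<integral>t. ?r t \<partial>nu) = 0" by simp
    have rint: "integrable nu ?r"
    proof (rule nu.integrable_const_bound[where B = "(R + 2)\<^sup>2"])
      show "?r \<in> borel_measurable nu" by (subst measurable_cong_sets[OF snu refl]) (rule rmeas)
      show "AE x in nu. norm (?r x) \<le> (R + 2)\<^sup>2" using rb by simp
    qed
    have "AE t in nu. ?r t = 0" using integral_nonneg_eq_0_iff_AE[OF rint] i0 by simp
    then have ae2: "AE t in nu. t = 2"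
    proof eventually_elim
      case (elim t)
      then have "max (-R) (min R t) = 2" by simp
      then show ?case using R2 by (auto simp: max_def min_def split: if_splits)
    qed
    show "nu = return borel 2"
    proof (rule measure_eqI)
      show "sets nu = sets (return borel 2)" using snu by simp
      fix A assume A: "A \<in> sets nu"
      have "measure nu A = (\<integral>t. indicator A t \<partial>nu)" using spnu by simp
      also have "\<dots> = (\<integral>t. indicator A (2::real) \<partial>nu)"
        by (rule integral_cong_AE) (use A ae2 in auto)
      also have "\<dots> = indicator A (2::real)" using tot spnu by simp
      finally have "emeasure nu A = ennreal (indicator A (2::real))"
        by (simp add: nu.emeasure_eq_measure)
      also have "\<dots> = emeasure (return borel 2) A" using A snu by (simp add: ennreal_indicator)
      finally show "emeasure nu A = emeasure (return borel 2) A" .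
    qed
  next
    assume nu: "nu = return borel (2::real)"
    show "is_spectral_measure M K phi nu"
      unfolding is_spectral_measure_def
    proof (intro conjI allI impI)
      show "sets nu = sets borel" using nu by simp
      have "prob_space (return borel (2::real))" by (rule prob_space_return) simp
      then show "finite_measure nu" using nu by (simp add: prob_space.finite_measure)
      fix f T assume fT: "f \<in> borel_measurable borel \<and> bounded (range f) \<and> is_fcalc M K f T"
      have "AE x in M. T phi x = f 2 * phi x"
        using fT sqint_phi P1 unfolding is_fcalc_def by auto
      then have "ip M phi (T phi) = f 2"
        using fT sqint_phi by (intro ip_phi_AE) (auto simp: is_fcalc_def intro: sqint_meas)
      also have "\<dots> = (\<integral>t. f t \<partial>nu)" using nu fT by (simp add: integral_return)
      finally show "ip M phi (T phi) = (\<integral>t. f t \<partial>nu)" .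
    qed
  qed
  show ?thesis using P1 P2 P3 by blast
qed


end
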